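(* Let $n \ge 3$ and $k = \lceil \log_2 n \rceil$. Then $\det'(Q_n) = k$ if $2^{k-1} < n \le 2^{k-1} + k$, and $\det'(Q_n) = k+1$ if $2^{k-1} + k < n \le 2^k$.
   Context: $Q_n$ is the $n$-dimensional hypercube: its vertices are the binary strings of length $n$, two being adjacent iff they differ in exactly one bit. For a graph $G$ with at most one isolated vertex and no component isomorphic to $K_2$, an edge subset $T$ is an edge determining set if the only automorphism $\phi$ of $G$ satisfying $\{\phi(u),\phi(v)\}=\{u,v\}$ for all $\{u,v\}\in T$ is the identity; the determining index $\det'(G)$ is the minimum size of an edge determining set. *)

theory Defs
  imports Complex_Main
begin

text \<open>A simple graph is given by a vertex set V and an edge set E of two-element
  subsets of V.\<close>

definition graph_aut :: "'a set \<Rightarrow> 'a set set \<Rightarrow> ('a \<Rightarrow> 'a) \<Rightarrow> bool" where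
  "graph_aut V E \<phi> \<longleftrightarrow> bij_betw \<phi> V V \<and>
     (\<forall>u\<in>V. \<forall>v\<in>V. {u, v} \<in> E \<longleftrightarrow> {\<phi> u, \<phi> v} \<in> E)"

definition edge_determining_set :: "'a set \<Rightarrow> 'a set set \<Rightarrow> 'a set set \<Rightarrow> bool" where
  "edge_determining_set V E T \<longleftrightarrow> T \<subseteq> E \<and>
     (\<forall>\<phi>. graph_aut V E \<phi> \<and> (\<forall>u v. {u, v} \<in> T \<longrightarrow> {\<phi> u, \<phi> v} = {u, v})
        \<longrightarrow> (\<forall>x\<in>V. \<phi> x = x))"

definition determining_index :: "'a set \<Rightarrow> 'a set set \<Rightarrow> nat" where
  "determining_index V E = (LEAST k. \<exists>T. edge_determining_set V E T \<and> card T = k)"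

definition hypercube_verts :: "nat \<Rightarrow> bool list set" where
  "hypercube_verts n = {xs. length xs = n}"

definition hypercube_adj :: "bool list \<Rightarrow> bool list \<Rightarrow> bool" where
  "hypercube_adj xs ys \<longleftrightarrow> length xs = length ys \<and>
     card {i. i < length xs \<and> xs ! i \<noteq> ys ! i} = 1"

definition hypercube_edges :: "nat \<Rightarrow> bool list set set" where
  "hypercube_edges n = {{u, v} | u v. u \<in> hypercube_verts n \<and> v \<in> hypercube_verts n \<and> hypercube_adj u v}"

end

theory Submission
  imports Defs
begin

definition flip :: "nat \<Rightarrow> bool list \<Rightarrow> bool list" where
  "flip i x = x[i := \<not> x ! i]"

lemma flip_len[simp]: "length (flip i x) = length x"
  by (simp add: flip_def)

lemma flip_nth: "k < length x \<Longrightarrow> flip i x ! k = (x ! k \<noteq> (k = i \<and> i < length x))"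
  by (auto simp: flip_def nth_list_update)

lemma flip_flip[simp]: "flip i (flip i x) = x"
  by (rule nth_equalityI) (auto simp: flip_nth)

lemma flip_inj: "i < length x \<Longrightarrow> j < length x \<Longrightarrow> flip i x = flip j x \<Longrightarrow> i = j"
  by (metis flip_nth)

lemma verts_iff[simp]: "x \<in> hypercube_verts n \<longleftrightarrow> length x = n"
  by (simp add: hypercube_verts_def)

lemma finite_verts: "finite (hypercube_verts n)"
  by (simp add: hypercube_verts_def finite_list_length)

lemma adj_sym: "hypercube_adj u v \<Longrightarrow> hypercube_adj v u"
proof -
  assume a: "hypercube_adj u v"
  from a[unfolded hypercube_adj_def] have l: "length u = length v"
    and c: "card {i. i < length u \<and> u ! i \<noteq> v ! i} = 1" by blast+
  have eq: "{i. i<length v \<and> v!i\<noteq>u!i} = {i. i<length u \<and> u!i\<noteq>v!i}"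
    using l by auto
  show ?thesis unfolding hypercube_adj_def eq by (metis l c)
qed

lemma adj_flip: assumes "length u = n"
  shows "hypercube_adj u v \<longleftrightarrow> (\<exists>i<n. v = flip i u)"
proof
  assume a: "hypercube_adj u v"
  then have lv: "length v = n" using assms by (simp add: hypercube_adj_def)
  from a obtain i where i: "{k. k < n \<and> u ! k \<noteq> v ! k} = {i}"
    using assms by (auto simp: hypercube_adj_def card_1_singleton_iff)
  then have "i < n" by auto
  moreover have "v = flip i u"
  proof (rule nth_equalityI)
    show "length v = length (flip i u)" using lv assms by simp
    fix k
    assume k: "k < length v"
    then have "k \<in> {k. k < n \<and> u ! k \<noteq> v ! k} \<longleftrightarrow> k = i" using i by blast
    then have "u ! k \<noteq> v ! k \<longleftrightarrow> k = i" using k lv by blast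
    then show "v ! k = flip i u ! k" using k lv assms \<open>i < n\<close>
      by (auto simp: flip_nth)
  qed
  ultimately show "\<exists>i<n. v = flip i u" by blast
next
  assume "\<exists>i<n. v = flip i u"
  then obtain i where i: "i < n" "v = flip i u" by blast
  then have "{k. k < length u \<and> u ! k \<noteq> v ! k} = {i}"
    using assms by (auto simp: flip_nth)
  then show "hypercube_adj u v" using i by (simp add: hypercube_adj_def)
qed

lemma edges_iff: "e \<in> hypercube_edges n \<longleftrightarrow> (\<exists>u i. length u = n \<and> i < n \<and> e = {u, flip i u})"
proof
  assume "e \<in> hypercube_edges n"
  then obtain u v where uv: "e={u,v}" "length u = n" "length v = n" "hypercube_adj u v"
    unfolding hypercube_edges_def by auto
  then obtain i where "i<n" "v = flip i u" using adj_flip by blast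
  then show "\<exists>u i. length u = n \<and> i < n \<and> e = {u, flip i u}" using uv by blast
next
  assume "\<exists>u i. length u = n \<and> i < n \<and> e = {u, flip i u}"
  then obtain u i where ui: "length u = n" "i < n" "e = {u, flip i u}" by blast
  then have "hypercube_adj u (flip i u)" using adj_flip by blast
  then show "e \<in> hypercube_edges n" unfolding hypercube_edges_def using ui
    by (intro CollectI exI[of _ u] exI[of _ "flip i u"]) simp
qed

lemma edge_pair_iff: assumes "length u = n" "length v = n"
  shows "{u, v} \<in> hypercube_edges n \<longleftrightarrow> hypercube_adj u v"
proof
  assume "{u, v} \<in> hypercube_edges n"
  then obtain u' v' where "{u,v} = {u',v'}" "hypercube_adj u' v'"
    unfolding hypercube_edges_def by auto
  then show "hypercube_adj u v" using adj_sym by (metis doubleton_eq_iff)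
next
  assume "hypercube_adj u v" then show "{u, v} \<in> hypercube_edges n"
    using assms unfolding hypercube_edges_def by auto
qed

lemma finite_edges: "finite (hypercube_edges n)"
proof -
  have "hypercube_edges n \<subseteq> Pow (hypercube_verts n)"
    unfolding hypercube_edges_def by auto
  then show ?thesis using finite_verts by (meson finite_Pow_iff finite_subset)
qed

lemma dir_unique: assumes "length u = n" "length v = n" "i < n" "j < n"
  "{u, flip i u} = {v, flip j v}" shows "i = j"
proof -
  from assms(5) consider "u = v \<and> flip i u = flip j v" | "u = flip j v \<and> flip i u = v"
    by (metis doubleton_eq_iff)
  then show ?thesis
  proof cases
    case 1 then show ?thesis using assms flip_inj by auto
  next
    case 2
    then have "flip i (flip j v) = v" by metis
    then have "flip i (flip j v) ! j = v ! j" by simp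
    then show ?thesis using assms by (auto simp: flip_nth split: if_splits)
  qed
qed


definition pa :: "(nat \<Rightarrow> nat) \<Rightarrow> (nat \<Rightarrow> bool) \<Rightarrow> bool list \<Rightarrow> bool list" where
  "pa \<sigma> b x = map (\<lambda>k. x ! \<sigma> k \<noteq> b k) [0..<length x]"

lemma pa_len[simp]: "length (pa \<sigma> b x) = length x"
  by (simp add: pa_def)

lemma pa_nth: "k < length x \<Longrightarrow> pa \<sigma> b x ! k = (x ! \<sigma> k \<noteq> b k)"
  by (simp add: pa_def)

lemma pa_aut:
  assumes into: "\<forall>i<n. \<sigma> i < n" and inj\<sigma>: "inj_on \<sigma> {..<n}"
  shows "graph_aut (hypercube_verts n) (hypercube_edges n) (pa \<sigma> b)"
proof -
  have surj: "\<sigma> ` {..<n} = {..<n}" using endo_inj_surj[of "{..<n}" \<sigma>] into inj\<sigma> by auto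
  have inj: "inj_on (pa \<sigma> b) (hypercube_verts n)"
  proof (rule inj_onI)
    fix x y assume x: "x \<in> hypercube_verts n" and y: "y \<in> hypercube_verts n"
      and e: "pa \<sigma> b x = pa \<sigma> b y"
    have k: "x ! \<sigma> k = y ! \<sigma> k" if "k < n" for k
    proof -
      have "pa \<sigma> b x ! k = pa \<sigma> b y ! k" using e by simp
      then show ?thesis using that x y by (cases "b k") (auto simp: pa_nth)
    qed
    show "x = y"
    proof (rule nth_equalityI)
      show "length x = length y" using x y by simp
      fix i assume "i < length x"
      then have "i \<in> \<sigma> ` {..<n}" using surj x by simp
      then obtain k where "k < n" "i = \<sigma> k" by auto
      then show "x ! i = y ! i" using k by simp
    qed
  qed
  have sub: "pa \<sigma> b ` hypercube_verts n \<subseteq> hypercube_verts n" by auto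
  have eq: "pa \<sigma> b ` hypercube_verts n = hypercube_verts n"
    using endo_inj_surj[OF finite_verts sub inj] .
  have adj: "hypercube_adj (pa \<sigma> b u) (pa \<sigma> b v) \<longleftrightarrow> hypercube_adj u v"
    if u: "length u = n" and v: "length v = n" for u v
  proof -
    let ?A = "{k. k < n \<and> u ! \<sigma> k \<noteq> v ! \<sigma> k}"
    have A: "{k. k < length (pa \<sigma> b u) \<and> pa \<sigma> b u ! k \<noteq> pa \<sigma> b v ! k} = ?A"
      using u v by (auto simp: pa_nth)
    have im: "\<sigma> ` ?A = {i. i < length u \<and> u ! i \<noteq> v ! i}"
    proof
      show "\<sigma> ` ?A \<subseteq> {i. i < length u \<and> u ! i \<noteq> v ! i}" using into u by auto
      show "{i. i < length u \<and> u ! i \<noteq> v ! i} \<subseteq> \<sigma> ` ?A"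
      proof
        fix i assume "i \<in> {i. i < length u \<and> u ! i \<noteq> v ! i}"
        then have i: "i < n" "u ! i \<noteq> v ! i" using u by auto
        then have "i \<in> \<sigma> ` {..<n}" using surj by simp
        then obtain k where "k < n" "i = \<sigma> k" by auto
        then show "i \<in> \<sigma> ` ?A" using i by auto
      qed
    qed
    have "card (\<sigma> ` ?A) = card ?A"
      by (rule card_image, rule inj_on_subset[OF inj\<sigma>]) auto
    then have "card ?A = card {i. i < length u \<and> u ! i \<noteq> v ! i}" using im by simp
    then show ?thesis unfolding hypercube_adj_def A using u v by simp
  qed
  show ?thesis unfolding graph_aut_def
  proof (intro conjI ballI)
    show "bij_betw (pa \<sigma> b) (hypercube_verts n) (hypercube_verts n)"
      using inj eq by (simp add: bij_betw_def)
    fix u v assume u: "u \<in> hypercube_verts n" and v: "v \<in> hypercube_verts n"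
    show "({u, v} \<in> hypercube_edges n) = ({pa \<sigma> b u, pa \<sigma> b v} \<in> hypercube_edges n)"
      using u v adj edge_pair_iff[of u n v] edge_pair_iff[of "pa \<sigma> b u" n "pa \<sigma> b v"] by simp
  qed
qed


lemma not_eds:
  assumes "graph_aut V E \<phi>" "\<forall>u v. {u,v} \<in> T \<longrightarrow> {\<phi> u, \<phi> v} = {u,v}" "x \<in> V" "\<phi> x \<noteq> x"
  shows "\<not> edge_determining_set V E T"
  using assms unfolding edge_determining_set_def by blast

lemma eds_finite: "edge_determining_set (hypercube_verts n) (hypercube_edges n) T \<Longrightarrow> finite T"
  unfolding edge_determining_set_def using finite_edges finite_subset by blast

lemma lower:
  assumes n: "1 \<le> n" and eds: "edge_determining_set (hypercube_verts n) (hypercube_edges n) T"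
  shows "2 \<le> card T \<and> n \<le> 2 ^ (card T - 1) + card T"
proof -
  have TE: "T \<subseteq> hypercube_edges n" using eds unfolding edge_determining_set_def by blast
  have finT: "finite T" using eds_finite[OF eds] .
  define dir where "dir e = (SOME i. i < n \<and> (\<exists>u. length u = n \<and> e = {u, flip i u}))" for e
  have dirP: "dir e < n \<and> (\<exists>u. length u = n \<and> e = {u, flip (dir e) u})" if "e \<in> T" for e
  proof -
    have "\<exists>i. i < n \<and> (\<exists>u. length u = n \<and> e = {u, flip i u})"
      using edges_iff[of e n] that TE by blast
    then show ?thesis unfolding dir_def by (rule someI_ex)
  qed
  have dir_eq: "dir {u, flip i u} = i" if a: "length u = n" "i < n" "{u, flip i u} \<in> T" for u i
  proof -
    obtain w where w: "length w = n" "{u, flip i u} = {w, flip (dir {u, flip i u}) w}"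
      using dirP[OF a(3)] by blast
    show ?thesis using dir_unique[OF a(1) w(1) a(2) _ w(2)] dirP[OF a(3)] by simp
  qed
  define D where "D = dir ` T"
  have cardD: "card D \<le> card T" unfolding D_def using card_image_le[OF finT] .
  have Dsub: "D \<subseteq> {..<n}" unfolding D_def using dirP by auto
  have finD: "finite D" using Dsub finite_subset by blast
  have D2: "2 \<le> card D"
  proof (rule ccontr)
    assume "\<not> 2 \<le> card D"
    then have "card D = 0 \<or> card D = 1" by linarith
    then obtain i where i: "i < n" "\<forall>e\<in>T. dir e = i"
    proof
      assume "card D = 0"
      then have "T = {}" using finD unfolding D_def by simp
      then show thesis using that[of 0] n by simp
    next
      assume "card D = 1"
      then obtain i where "D = {i}" using card_1_singleton_iff by (metis One_nat_def)
      then show thesis using that[of i] Dsub unfolding D_def by auto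
    qed
    define \<phi> where "\<phi> = pa id (\<lambda>k. k = i)"
    have aut: "graph_aut (hypercube_verts n) (hypercube_edges n) \<phi>"
      unfolding \<phi>_def by (rule pa_aut) auto
    have \<phi>flip: "\<phi> x = flip i x" if "length x = n" for x
      by (rule nth_equalityI) (auto simp: \<phi>_def pa_nth flip_nth that i(1))
    have fixT: "\<forall>u v. {u,v} \<in> T \<longrightarrow> {\<phi> u, \<phi> v} = {u,v}"
    proof (intro allI impI)
      fix u v assume uv: "{u,v} \<in> T"
      then obtain w where w: "length w = n" "{u,v} = {w, flip i w}" using dirP[OF uv] i by auto
      have lu: "length u = n" "length v = n" using w by (auto simp: doubleton_eq_iff)
      have "{\<phi> u, \<phi> v} = \<phi> ` {u,v}" by simp
      also have "\<dots> = \<phi> ` {w, flip i w}" using w by simp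
      also have "\<dots> = {flip i w, w}" using w \<phi>flip by simp
      finally show "{\<phi> u, \<phi> v} = {u,v}" using w by auto
    qed
    have "\<phi> (replicate n False) ! i \<noteq> replicate n False ! i"
      using \<phi>flip[of "replicate n False"] i by (simp add: flip_nth)
    then have "\<phi> (replicate n False) \<noteq> replicate n False" by metis
    then show False using not_eds[OF aut fixT, of "replicate n False"] eds by simp
  qed
  have main: "n - card D \<le> 2 ^ (card T - 1)"
  proof (rule ccontr)
    assume big: "\<not> n - card D \<le> 2 ^ (card T - 1)"
    define C where "C = {..<n} - D"
    have cardC: "card C = n - card D" unfolding C_def using Dsub finD by (simp add: card_Diff_subset)
    have "T \<noteq> {}" using D2 unfolding D_def by auto
    then obtain e0 where e0: "e0 \<in> T" by blast
    have agree: "x ! c = y ! c" if a: "c \<in> C" "e \<in> T" "x \<in> e" "y \<in> e" for c e x y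
    proof -
      obtain u where u: "length u = n" "e = {u, flip (dir e) u}" using dirP[OF a(2)] by blast
      have "dir e \<in> D" using a(2) unfolding D_def by simp
      then have "c \<noteq> dir e" "c < n" using a(1) unfolding C_def by auto
      then have fu: "flip (dir e) u ! c = u ! c" using u by (simp add: flip_nth)
      have "x = u \<or> x = flip (dir e) u" "y = u \<or> y = flip (dir e) u" using a(3,4) u(2) by blast+
      then show ?thesis using fu by auto
    qed
    define S where "S c = {e\<in>T. \<exists>x\<in>e. x ! c}" for c
    define N where "N c = (if e0 \<in> S c then T - S c else S c)" for c
    have memS: "e \<in> S c \<longleftrightarrow> x ! c" if "c \<in> C" "e \<in> T" "x \<in> e" for c e x
      using agree[OF that(1,2)] that unfolding S_def by blast
    have Nsub: "N ` C \<subseteq> Pow (T - {e0})" unfolding N_def S_def by auto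
    have cardP: "card (Pow (T - {e0})) = 2 ^ (card T - 1)"
      using finT e0 by (simp add: card_Pow card_Diff_singleton)
    have "\<not> inj_on N C"
    proof
      assume "inj_on N C"
      then have "card C \<le> card (Pow (T - {e0}))" using card_inj_on_le[OF _ Nsub] finT by blast
      then show False using big cardC cardP by simp
    qed
    then obtain c c' where cc: "c \<in> C" "c' \<in> C" "c \<noteq> c'" "N c = N c'"
      unfolding inj_on_def by blast
    define b where "b = ((e0 \<in> S c) \<noteq> (e0 \<in> S c'))"
    have key: "x ! c = (x ! c' \<noteq> b)" if "e \<in> T" "x \<in> e" for e x
    proof (cases "e = e0")
      case True
      then show ?thesis using memS[OF cc(1) that] memS[OF cc(2) that] unfolding b_def by auto
    next
      case False
      have "e \<in> N c \<longleftrightarrow> (x ! c \<noteq> (e0 \<in> S c))"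
        using memS[OF cc(1) that] that False unfolding N_def by auto
      moreover have "e \<in> N c' \<longleftrightarrow> (x ! c' \<noteq> (e0 \<in> S c'))"
        using memS[OF cc(2) that] that False unfolding N_def by auto
      ultimately show ?thesis using cc(4) unfolding b_def by auto
    qed
    have cn: "c < n" "c' < n" using cc unfolding C_def by auto
    define \<sigma> where "\<sigma> k = (if k = c then c' else if k = c' then c else k)" for k
    define \<phi> where "\<phi> = pa \<sigma> (\<lambda>k. b \<and> (k = c \<or> k = c'))"
    have aut: "graph_aut (hypercube_verts n) (hypercube_edges n) \<phi>"
      unfolding \<phi>_def
    proof (rule pa_aut)
      show "\<forall>i<n. \<sigma> i < n" using cn unfolding \<sigma>_def by auto
      show "inj_on \<sigma> {..<n}" unfolding \<sigma>_def by (rule inj_onI) (auto split: if_splits)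
    qed
    have fixx: "\<phi> x = x" if "e \<in> T" "x \<in> e" for e x
    proof -
      have "length x = n" using that TE edges_iff[of e n] by auto
      then show ?thesis using key[OF that] cn cc(3)
        by (intro nth_equalityI) (auto simp: \<phi>_def pa_nth \<sigma>_def)
    qed
    have fixT: "\<forall>u v. {u,v} \<in> T \<longrightarrow> {\<phi> u, \<phi> v} = {u,v}"
    proof (intro allI impI)
      fix u v assume "{u,v} \<in> T"
      then have "\<phi> u = u" "\<phi> v = v" using fixx by blast+
      then show "{\<phi> u, \<phi> v} = {u,v}" by simp
    qed
    define x0 where "x0 = (replicate n False)[c := \<not> b]"
    have "\<phi> x0 ! c \<noteq> x0 ! c" using cn cc(3) unfolding x0_def \<phi>_def \<sigma>_def by (simp add: pa_nth)
    then have "\<phi> x0 \<noteq> x0" by metis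
    moreover have "x0 \<in> hypercube_verts n" unfolding x0_def by simp
    ultimately show False using not_eds[OF aut fixT] eds by blast
  qed
  show ?thesis using D2 cardD main by linarith
qed


lemma aut_len: "graph_aut (hypercube_verts n) (hypercube_edges n) \<phi> \<Longrightarrow> length x = n \<Longrightarrow> length (\<phi> x) = n"
  unfolding graph_aut_def bij_betw_def by auto

lemma aut_inj: "graph_aut V E \<phi> \<Longrightarrow> inj_on \<phi> V"
  unfolding graph_aut_def bij_betw_def by auto

lemma aut_adj:
  assumes aut: "graph_aut (hypercube_verts n) (hypercube_edges n) \<phi>" and x: "length x = n" and i: "i < n"
  shows "\<exists>p<n. \<phi> (flip i x) = flip p (\<phi> x)"
proof -
  have "hypercube_adj x (flip i x)" using adj_flip[OF x] i by blast
  then have "{x, flip i x} \<in> hypercube_edges n" using edge_pair_iff[of x n "flip i x"] x by simp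
  then have "{\<phi> x, \<phi> (flip i x)} \<in> hypercube_edges n"
    using aut x unfolding graph_aut_def by simp
  then have "hypercube_adj (\<phi> x) (\<phi> (flip i x))"
    using edge_pair_iff aut_len[OF aut] x by simp
  then show ?thesis using adj_flip[of "\<phi> x" n] aut_len[OF aut x] by blast
qed

lemma char:
  assumes aut: "graph_aut (hypercube_verts n) (hypercube_edges n) \<phi>"
  shows "\<exists>\<pi>. inj_on \<pi> {..<n} \<and> (\<forall>i<n. \<pi> i < n) \<and>
     (\<forall>x. length x = n \<longrightarrow> (\<forall>i<n. \<phi> x ! \<pi> i = (x ! i \<noteq> \<phi> (replicate n False) ! \<pi> i)))"
proof -
  define z where "z = replicate n False"
  define a where "a = \<phi> z"
  have lz: "length z = n" unfolding z_def by simp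
  have la: "length a = n" unfolding a_def using aut_len[OF aut lz] .
  have injphi: "inj_on \<phi> (hypercube_verts n)" using aut_inj[OF aut] .
  define \<pi> where "\<pi> i = (SOME p. p < n \<and> \<phi> (flip i z) = flip p a)" for i
  have \<pi>P: "\<pi> i < n \<and> \<phi> (flip i z) = flip (\<pi> i) a" if "i < n" for i
  proof -
    have "\<exists>p. p < n \<and> \<phi> (flip i z) = flip p a" using aut_adj[OF aut lz that] unfolding a_def by blast
    then show ?thesis unfolding \<pi>_def by (rule someI_ex)
  qed
  have inj\<pi>: "inj_on \<pi> {..<n}"
  proof (rule inj_onI)
    fix i j assume i: "i \<in> {..<n}" and j: "j \<in> {..<n}" and e: "\<pi> i = \<pi> j"
    then have "\<phi> (flip i z) = \<phi> (flip j z)" using \<pi>P by auto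
    then have "flip i z = flip j z" using injphi lz unfolding inj_on_def by auto
    then show "i = j" using flip_inj[of i z j] i j lz by auto
  qed
  have into: "\<forall>i<n. \<pi> i < n" using \<pi>P by blast
  have surj: "\<pi> ` {..<n} = {..<n}" using endo_inj_surj[of "{..<n}" \<pi>] into inj\<pi> by auto
  have ext: "y = y'" if "length y = n" "length y' = n" "\<forall>i<n. y ! \<pi> i = y' ! \<pi> i" for y y'
  proof (rule nth_equalityI)
    show "length y = length y'" using that by simp
    fix k assume "k < length y"
    then have "k \<in> \<pi> ` {..<n}" using surj that by simp
    then obtain i where "i < n" "k = \<pi> i" by auto
    then show "y ! k = y' ! k" using that by simp
  qed
  have \<pi>eq: "\<pi> l = \<pi> i \<longleftrightarrow> l = i" if "l < n" "i < n" for l i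
    using inj\<pi> that unfolding inj_on_def by auto
  define P where "P x \<longleftrightarrow> (\<forall>i<n. \<phi> x ! \<pi> i = (x ! i \<noteq> a ! \<pi> i))" for x
  define W where "W x = {k. k < n \<and> x ! k}" for x
  have finW: "finite (W x)" for x unfolding W_def by simp
  have Wflip: "W (flip i x) = W x - {i}" if "length x = n" "i < n" "x ! i" for x i
    using that unfolding W_def by (auto simp: flip_nth)
  have claim: "\<forall>x. length x = n \<longrightarrow> card (W x) = m \<longrightarrow> P x" for m
  proof (induction m rule: less_induct)
    case (less m)
    show ?case
    proof (intro allI impI)
      fix x assume x: "length x = n" and m: "card (W x) = m"
      consider "m = 0" | "m = 1" | "m \<ge> 2" by linarith
      then show "P x"
      proof cases
        case 1
        then have "W x = {}" using m finW by simp
        then have "x = z" using x lz unfolding W_def z_def by (intro nth_equalityI) auto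
        then show ?thesis unfolding P_def a_def z_def by simp
      next
        case 2
        then obtain i where i: "W x = {i}" using m card_1_singleton_iff by (metis One_nat_def)
        then have iN: "i < n" unfolding W_def by auto
        have xi: "x ! l = (l = i)" if "l < n" for l
          using i that unfolding W_def by auto
        have "x = flip i z" using x lz iN xi by (intro nth_equalityI) (auto simp: flip_nth z_def)
        then have "\<phi> x = flip (\<pi> i) a" using \<pi>P[OF iN] by simp
        then show ?thesis unfolding P_def using la into iN xi \<pi>eq iN by (auto simp: flip_nth)
      next
        case 3
        have "card (W x) \<ge> 2" using 3 m by simp
        then obtain i j where ij: "i \<in> W x" "j \<in> W x" "i \<noteq> j"
          by (metis One_nat_def card_le_Suc0_iff_eq finW not_less_eq_eq numeral_2_eq_2)
        then have iN: "i < n" "x ! i" and jN: "j < n" "x ! j" unfolding W_def by auto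
        define y where "y = flip i x"
        define y' where "y' = flip j x"
        define w where "w = flip i y'"
        have ly: "length y = n" "length y' = n" "length w = n" unfolding y_def y'_def w_def using x by auto
        have Wy: "card (W y) = m - 1" unfolding y_def using Wflip[OF x iN] finW ij m by simp
        have Wy': "card (W y') = m - 1" unfolding y'_def using Wflip[OF x jN] finW ij m by simp
        have y'i: "y' ! i" unfolding y'_def using iN ij x by (simp add: flip_nth)
        have Ww: "card (W w) = m - 2"
          unfolding w_def using Wflip[OF ly(2) iN(1) y'i] Wflip[OF x jN] finW ij m
          by (simp add: card_Diff_singleton_if y'_def)
        have Py: "P y" using less.IH[of "m - 1"] 3 ly Wy by simp
        have Py': "P y'" using less.IH[of "m - 1"] 3 ly Wy' by simp
        have Pw: "P w" using less.IH[of "m - 2"] 3 ly Ww by simp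
        have "flip i y = x" unfolding y_def by simp
        then obtain p where p: "p < n" "\<phi> x = flip p (\<phi> y)" using aut_adj[OF aut ly(1) iN(1)] by metis
        have "flip j y' = x" unfolding y'_def by simp
        then obtain q where q: "q < n" "\<phi> x = flip q (\<phi> y')" using aut_adj[OF aut ly(2) jN(1)] by metis
        have lphi: "length (\<phi> y) = n" "length (\<phi> y') = n" using aut_len[OF aut] ly by auto
        have E1: "\<phi> x ! \<pi> l = (((x ! l \<noteq> (l = i)) \<noteq> a ! \<pi> l) \<noteq> (\<pi> l = p))" if "l < n" for l
          using Py that p lphi into x iN unfolding P_def y_def by (simp add: flip_nth)
        have E2: "\<phi> x ! \<pi> l = (((x ! l \<noteq> (l = j)) \<noteq> a ! \<pi> l) \<noteq> (\<pi> l = q))" if "l < n" for l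
          using Py' that q lphi into x jN unfolding P_def y'_def by (simp add: flip_nth)
        show ?thesis
        proof (cases "p = \<pi> i")
          case True
          then show ?thesis unfolding P_def using E1 \<pi>eq iN by auto
        next
          case False
          have "q = \<pi> i" using E1[OF iN(1)] E2[OF iN(1)] False iN ij by auto
          moreover have "p = \<pi> j" using E1[OF jN(1)] E2[OF jN(1)] calculation jN ij \<pi>eq iN by auto
          ultimately have "\<forall>l<n. \<phi> x ! \<pi> l = \<phi> w ! \<pi> l"
            using E1 Pw \<pi>eq jN iN x unfolding P_def w_def y'_def by (auto simp: flip_nth)
          then have "\<phi> x = \<phi> w" using ext aut_len[OF aut] x ly by blast
          then have "x = w" using injphi x ly unfolding inj_on_def by auto
          moreover have "w ! i \<noteq> x ! i" unfolding w_def using iN x ly by (simp add: flip_nth y'i)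
          ultimately show ?thesis by simp
        qed
      qed
    qed
  qed
  show ?thesis using inj\<pi> into claim unfolding P_def a_def z_def by blast
qed


lemma bits_eq:
  fixes m m' :: nat
  shows "m < 2^k \<Longrightarrow> m' < 2^k \<Longrightarrow> (\<forall>j<k. odd (m div 2^j) = odd (m' div 2^j)) \<Longrightarrow> m = m'"
proof (induction k arbitrary: m m')
  case 0
  then show ?case by simp
next
  case (Suc k)
  have h: "m div 2 < 2^k" "m' div 2 < 2^k" using Suc.prems by auto
  have "\<forall>j<k. odd (m div 2 div 2^j) = odd (m' div 2 div 2^j)"
  proof (intro allI impI)
    fix j assume "j < k"
    then have "Suc j < Suc k" by simp
    then have "odd (m div 2^Suc j) = odd (m' div 2^Suc j)" using Suc.prems(3) by blast
    then show "odd (m div 2 div 2^j) = odd (m' div 2 div 2^j)" by (simp add: div_mult2_eq)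
  qed
  then have "m div 2 = m' div 2" using Suc.IH h by blast
  moreover have "odd m = odd m'" using Suc.prems(3)[rule_format, of 0] by simp
  ultimately show ?case by (metis div_mult_mod_eq odd_iff_mod_2_eq_one mod2_eq_if)
qed

lemma ext_pi:
  assumes "inj_on \<pi> {..<n}" "\<forall>i<n. \<pi> i < n" "length y = n" "length y' = n" "\<forall>i<n. y ! \<pi> i = y' ! \<pi> i"
  shows "y = y'"
proof (rule nth_equalityI)
  have surj: "\<pi> ` {..<n} = {..<n}" using endo_inj_surj[of "{..<n}" \<pi>] assms by auto
  show "length y = length y'" using assms by simp
  fix k assume "k < length y"
  then have "k \<in> \<pi> ` {..<n}" using surj assms by simp
  then obtain i where "i < n" "k = \<pi> i" by auto
  then show "y ! k = y' ! k" using assms by simp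
qed

lemma edgefix:
  assumes inj: "inj_on \<pi> {..<n}" and into: "\<forall>i<n. \<pi> i < n"
    and len: "\<forall>x. length x = n \<longrightarrow> length (\<phi> x) = n"
    and form: "\<forall>x. length x = n \<longrightarrow> (\<forall>i<n. \<phi> x ! \<pi> i = (x ! i \<noteq> a ! \<pi> i))"
    and u: "length u = n" and j: "j < n"
    and fx: "{\<phi> u, \<phi> (flip j u)} = {u, flip j u}"
  shows "\<pi> j = j \<and> (\<forall>l<n. l \<noteq> j \<longrightarrow> u ! \<pi> l = (u ! l \<noteq> a ! \<pi> l))"
proof -
  have \<pi>eq: "\<pi> l = \<pi> i \<longleftrightarrow> l = i" if "l < n" "i < n" for l i
    using inj that unfolding inj_on_def by auto
  have lf: "length (flip j u) = n" using u by simp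
  have "\<phi> (flip j u) = flip (\<pi> j) (\<phi> u)"
  proof (rule ext_pi[OF inj into])
    show "length (\<phi> (flip j u)) = n" using len lf by blast
    show "length (flip (\<pi> j) (\<phi> u)) = n" using len u by simp
    show "\<forall>i<n. \<phi> (flip j u) ! \<pi> i = flip (\<pi> j) (\<phi> u) ! \<pi> i"
      using form u lf len into j \<pi>eq by (auto simp: flip_nth)
  qed
  then have fx2: "{\<phi> u, flip (\<pi> j) (\<phi> u)} = {u, flip j u}" using fx by simp
  have pj: "\<pi> j < n" using into j by simp
  have c: "\<phi> u = u \<or> \<phi> u = flip j u" using fx2 by (metis doubleton_eq_iff)
  have "\<pi> j = j"
  proof (cases "\<phi> u = u")
    case True
    then have "flip (\<pi> j) u = flip j u" using fx2 flip_inj[of j u j] by (metis doubleton_eq_iff)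
    then show ?thesis using flip_inj[of "\<pi> j" u j] u j pj by simp
  next
    case False
    then have e: "\<phi> u = flip j u" using c by simp
    then have "flip (\<pi> j) (flip j u) = u" using fx2 False by (metis doubleton_eq_iff)
    then have "flip (\<pi> j) (flip j u) = flip j (flip j u)" by simp
    then show ?thesis using flip_inj[of "\<pi> j" "flip j u" j] u j pj by simp
  qed
  moreover have "\<forall>l<n. l \<noteq> j \<longrightarrow> u ! \<pi> l = (u ! l \<noteq> a ! \<pi> l)"
  proof (intro allI impI)
    fix l assume l: "l < n" "l \<noteq> j"
    then have "\<pi> l \<noteq> j" using \<pi>eq[OF l(1) j] calculation by simp
    then have "\<phi> u ! \<pi> l = u ! \<pi> l" using c u into l by (auto simp: flip_nth)
    then show "u ! \<pi> l = (u ! l \<noteq> a ! \<pi> l)" using form u l by simp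
  qed
  ultimately show ?thesis by simp
qed


lemma upper:
  assumes t2: "2 \<le> t" and tn: "t \<le> n" and nt: "n - t \<le> 2 ^ (t - 1)"
  shows "\<exists>T. edge_determining_set (hypercube_verts n) (hypercube_edges n) T \<and> card T = t"
proof -
  define u where "u j = map (\<lambda>c. t \<le> c \<and> j < t - 1 \<and> odd ((c - t) div 2^j)) [0..<n]" for j
  have lu: "length (u j) = n" for j unfolding u_def by simp
  have unth: "u j ! c = (t \<le> c \<and> j < t - 1 \<and> odd ((c - t) div 2^j))" if "c < n" for j c
    unfolding u_def using that by simp
  define ed where "ed j = {u j, flip j (u j)}" for j
  define T where "T = ed ` {..<t}"
  have TE: "T \<subseteq> hypercube_edges n"
  proof
    fix e assume "e \<in> T"
    then obtain j where j: "j < t" "e = {u j, flip j (u j)}" unfolding T_def ed_def by blast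
    then have "j < n" using tn by simp
    then show "e \<in> hypercube_edges n" unfolding edges_iff using j lu by blast
  qed
  have inj: "inj_on ed {..<t}"
  proof (rule inj_onI)
    fix i j assume "i \<in> {..<t}" "j \<in> {..<t}" "ed i = ed j"
    then show "i = j" using dir_unique[OF lu lu, of i j] tn unfolding ed_def by auto
  qed
  have cardT: "card T = t" unfolding T_def using card_image[OF inj] by simp
  have eds: "edge_determining_set (hypercube_verts n) (hypercube_edges n) T"
    unfolding edge_determining_set_def
  proof (intro conjI allI impI ballI)
    show "T \<subseteq> hypercube_edges n" using TE .
    fix \<phi> assume h: "graph_aut (hypercube_verts n) (hypercube_edges n) \<phi> \<and>
         (\<forall>u v. {u, v} \<in> T \<longrightarrow> {\<phi> u, \<phi> v} = {u, v})"
    then have aut: "graph_aut (hypercube_verts n) (hypercube_edges n) \<phi>" by blast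
    have fx: "{\<phi> (u j), \<phi> (flip j (u j))} = {u j, flip j (u j)}" if "j < t" for j
      using h that unfolding T_def ed_def by blast
    define a where "a = \<phi> (replicate n False)"
    obtain \<pi> where inj\<pi>: "inj_on \<pi> {..<n}" and into: "\<forall>i<n. \<pi> i < n"
      and form: "\<forall>x. length x = n \<longrightarrow> (\<forall>i<n. \<phi> x ! \<pi> i = (x ! i \<noteq> a ! \<pi> i))"
      using char[OF aut] unfolding a_def by blast
    have len: "\<forall>x. length x = n \<longrightarrow> length (\<phi> x) = n" using aut_len[OF aut] by blast
    have F: "\<pi> j = j \<and> (\<forall>l<n. l \<noteq> j \<longrightarrow> u j ! \<pi> l = (u j ! l \<noteq> a ! \<pi> l))" if "j < t" for j
    proof -
      have jn: "j < n" using that tn by simp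
      show ?thesis using edgefix[OF inj\<pi> into len form lu[of j] jn fx[OF that]] .
    qed
    have \<pi>eq: "\<pi> l = \<pi> i \<longleftrightarrow> l = i" if "l < n" "i < n" for l i
      using inj\<pi> that unfolding inj_on_def by auto
    have A: "\<pi> l = l \<and> \<not> a ! \<pi> l" if l: "l < n" for l
    proof (cases "l < t")
      case True
      define j where "j = (if l = 0 then 1 else 0 :: nat)"
      have j: "j < t" "j \<noteq> l" unfolding j_def using t2 by auto
      then show ?thesis using F[OF True] F[OF j(1)] l by auto
    next
      case False
      have pl: "\<pi> l < n" using into l by simp
      have ge: "t \<le> \<pi> l"
      proof (rule ccontr)
        assume "\<not> t \<le> \<pi> l"
        then have "\<pi> (\<pi> l) = \<pi> l" using F by simp
        then have "\<pi> l = l" using \<pi>eq[OF pl l] by simp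
        then show False using False \<open>\<not> t \<le> \<pi> l\<close> by simp
      qed
      have tl: "t - 1 < t" "t - 1 \<noteq> l" using t2 False by auto
      have na: "\<not> a ! \<pi> l" using F[OF tl(1)] tl(2) l pl unth by auto
      have bits: "odd ((\<pi> l - t) div 2^j) = odd ((l - t) div 2^j)" if "j < t - 1" for j
      proof -
        have "j < t" "j \<noteq> l" using that False by auto
        then have "u j ! \<pi> l = u j ! l" using F[of j] l na by auto
        then show ?thesis using unth[OF pl, of j] unth[OF l, of j] that ge False by simp
      qed
      have "\<pi> l - t < 2 ^ (t - 1)" "l - t < 2 ^ (t - 1)" using pl l nt ge False by auto
      then have "\<pi> l - t = l - t" using bits_eq bits by blast
      then have "\<pi> l = l" using ge False by simp
      then show ?thesis using na by simp
    qed
    fix x assume x: "x \<in> hypercube_verts n"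
    show "\<phi> x = x"
    proof (rule nth_equalityI)
      show "length (\<phi> x) = length x" using len x by simp
      fix l assume "l < length (\<phi> x)"
      then have l: "l < n" using len x by simp
      have "\<phi> x ! \<pi> l = (x ! l \<noteq> a ! \<pi> l)" using form x l by simp
      moreover have "\<pi> l = l" "\<not> a ! l" using A[OF l] by auto
      ultimately show "\<phi> x ! l = x ! l" by simp
    qed
  qed
  show ?thesis using eds cardT by blast
qed


lemma di_eq:
  assumes "\<exists>T. edge_determining_set V E T \<and> card T = m"
    and "\<forall>T. edge_determining_set V E T \<longrightarrow> m \<le> card T"
  shows "determining_index V E = m"
  unfolding determining_index_def by (rule Least_equality) (use assms in auto)

lemma log_facts:
  fixes n k :: nat
  assumes n: "n \<ge> 3" and k: "k = nat \<lceil>log 2 (real n)\<rceil>"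
  shows "2 \<le> k \<and> 2 ^ (k - 1) < n \<and> n \<le> 2 ^ k"
proof -
  define L where "L = log 2 (real n)"
  have npos: "0 < real n" using n by simp
  have L1: "1 < L" unfolding L_def using n by (subst one_less_log_cancel_iff) auto
  then have c2: "2 \<le> \<lceil>L\<rceil>" by (metis ceiling_le_zero ceiling_less_cancel le_of_int_ceiling ceiling_mono
      less_le_not_le linorder_not_le of_int_1 one_add_one zle_add1_eq_le ceiling_le_iff)
  have ik: "int k = \<lceil>L\<rceil>" unfolding k L_def[symmetric] using c2 by simp
  then have k2: "2 \<le> k" using c2 by linarith
  have kL: "real k = of_int \<lceil>L\<rceil>" using ik by (metis of_int_of_nat_eq)
  have "L \<le> real k" using kL by simp
  then have "real n \<le> 2 powr real k" unfolding L_def using npos by (simp add: log_le_iff)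
  then have "real n \<le> 2 ^ k" by (simp add: powr_realpow)
  then have up: "n \<le> 2 ^ k" by (metis of_nat_le_iff of_nat_numeral of_nat_power)
  have "real k - 1 < L" using kL ceiling_correct[of L] by simp
  moreover have "real (k - 1) = real k - 1" using k2 by simp
  ultimately have "real (k - 1) < L" by simp
  then have "2 powr real (k - 1) < real n" unfolding L_def using npos by (simp add: less_log_iff)
  then have "real (2 ^ (k - 1)) < real n" by (simp add: powr_realpow)
  then have lo: "2 ^ (k - 1) < n" by linarith
  show ?thesis using k2 up lo by blast
qed


lemma pow_ge: "(j::nat) + 1 \<le> 2 ^ j"
  using less_exp[of j] by (simp add: Suc_leI)

theorem corollary3:
  fixes n k :: nat
  assumes "n \<ge> 3"
    and "k = nat \<lceil>log 2 (real n)\<rceil>"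
  shows "(2 ^ (k - 1) < n \<and> n \<le> 2 ^ (k - 1) + k \<longrightarrow>
            determining_index (hypercube_verts n) (hypercube_edges n) = k)
       \<and> (2 ^ (k - 1) + k < n \<and> n \<le> 2 ^ k \<longrightarrow>
            determining_index (hypercube_verts n) (hypercube_edges n) = k + 1)"
proof -
  have LF: "2 \<le> k \<and> 2 ^ (k - 1) < n \<and> n \<le> 2 ^ k" using log_facts[OF assms] .
  then obtain j where j: "k = j + 2" by (metis add.commute le_Suc_ex)
  have pk: "(2::nat) ^ (k - 1) = 2 * 2 ^ j" using j by simp
  have pk2: "(2::nat) ^ k = 4 * 2 ^ j" using j by (simp add: power_add mult.commute)
  have pj: "j + 1 \<le> 2 ^ j" using pow_ge .
  have n1: "1 \<le> n" using assms by simp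
  have lowerT: "\<And>T. edge_determining_set (hypercube_verts n) (hypercube_edges n) T \<Longrightarrow>
      2 \<le> card T \<and> n \<le> 2 ^ (card T - 1) + card T" using lower[OF n1] by blast
  show ?thesis
  proof (intro conjI impI)
    assume h: "2 ^ (k - 1) < n \<and> n \<le> 2 ^ (k - 1) + k"
    show "determining_index (hypercube_verts n) (hypercube_edges n) = k"
    proof (rule di_eq)
      show "\<exists>T. edge_determining_set (hypercube_verts n) (hypercube_edges n) T \<and> card T = k"
        by (rule upper) (use LF h pk pj j in auto)
      show "\<forall>T. edge_determining_set (hypercube_verts n) (hypercube_edges n) T \<longrightarrow> k \<le> card T"
      proof (intro allI impI)
        fix T assume "edge_determining_set (hypercube_verts n) (hypercube_edges n) T"
        then have t: "2 \<le> card T" "n \<le> 2 ^ (card T - 1) + card T" using lowerT by blast+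
        show "k \<le> card T"
        proof (rule ccontr)
          assume "\<not> k \<le> card T"
          then have "card T - 1 \<le> j" using j by simp
          then have "(2::nat) ^ (card T - 1) \<le> 2 ^ j" by (rule power_increasing) simp
          then show False using t h pk pj j \<open>\<not> k \<le> card T\<close> by linarith
        qed
      qed
    qed
  next
    assume h: "2 ^ (k - 1) + k < n \<and> n \<le> 2 ^ k"
    show "determining_index (hypercube_verts n) (hypercube_edges n) = k + 1"
    proof (rule di_eq)
      show "\<exists>T. edge_determining_set (hypercube_verts n) (hypercube_edges n) T \<and> card T = k + 1"
        by (rule upper) (use LF h pk pk2 pj j in auto)
      show "\<forall>T. edge_determining_set (hypercube_verts n) (hypercube_edges n) T \<longrightarrow> k + 1 \<le> card T"
      proof (intro allI impI)
        fix T assume "edge_determining_set (hypercube_verts n) (hypercube_edges n) T"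
        then have t: "2 \<le> card T" "n \<le> 2 ^ (card T - 1) + card T" using lowerT by blast+
        show "k + 1 \<le> card T"
        proof (rule ccontr)
          assume "\<not> k + 1 \<le> card T"
          then have "card T - 1 \<le> k - 1" by simp
          then have "(2::nat) ^ (card T - 1) \<le> 2 ^ (k - 1)" by (rule power_increasing) simp
          then show False using t h \<open>\<not> k + 1 \<le> card T\<close> by linarith
        qed
      qed
    qed
  qed
qed

end
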